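(* The Riemannian manifold $(\Theta,g)$, i.e. the space of beta distributions equipped with the Fisher information metric, has strictly negative sectional curvature at every point $(x,y)\in\Theta$.
   Context: For $x,y>0$ the beta distribution $B(x,y)$ is the probability measure on $[0,1]$ with Lebesgue density $p(t;x,y)=\frac{\Gamma(x+y)}{\Gamma(x)\Gamma(y)}t^{x-1}(1-t)^{y-1}$. Let $\psi(x)=\frac{d}{dx}\ln\Gamma(x)$ be the digamma function. The Fisher information metric on the parameter space $\Theta=(0,\infty)^2$ is the Riemannian metric $g_{(x,y)}(u,v)=u^tI(x,y)v$, where \[ I(x,y)=\begin{pmatrix}\psi'(x)-\psi'(x+y) & -\psi'(x+y)\\ -\psi'(x+y) & \psi'(y)-\psi'(x+y)\end{pmatrix}. \] *)

theory Defs
  imports "HOL-Analysis.Analysis"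
begin

text \<open>Points of the parameter space and tangent vectors are pairs of reals;
coordinate indices are 0 (for x) and 1 (for y).\<close>

definition comp :: "nat \<Rightarrow> real \<times> real \<Rightarrow> real" where
  "comp k p = (if k = 0 then fst p else snd p)"

definition shift :: "nat \<Rightarrow> real \<Rightarrow> real \<times> real \<Rightarrow> real \<times> real" where
  "shift k t p = (if k = 0 then (fst p + t, snd p) else (fst p, snd p + t))"

definition pd :: "nat \<Rightarrow> (real \<times> real \<Rightarrow> real) \<Rightarrow> real \<times> real \<Rightarrow> real" where
  "pd k f p = deriv (\<lambda>t. f (shift k t p)) 0"

text \<open>Fisher information matrix of the beta family, psi' = trigamma = Polygamma 1.\<close>
definition fisher :: "nat \<Rightarrow> nat \<Rightarrow> real \<times> real \<Rightarrow> real" where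
  "fisher i j p = (let x = fst p; y = snd p in
     if i = 0 \<and> j = 0 then Polygamma 1 x - Polygamma 1 (x + y)
     else if i = 1 \<and> j = 1 then Polygamma 1 y - Polygamma 1 (x + y)
     else - Polygamma 1 (x + y))"

definition fisher_det :: "real \<times> real \<Rightarrow> real" where
  "fisher_det p = fisher 0 0 p * fisher 1 1 p - fisher 0 1 p * fisher 1 0 p"

definition fisher_inv :: "nat \<Rightarrow> nat \<Rightarrow> real \<times> real \<Rightarrow> real" where
  "fisher_inv i j p =
     (if i = 0 \<and> j = 0 then fisher 1 1 p / fisher_det p
      else if i = 1 \<and> j = 1 then fisher 0 0 p / fisher_det p
      else - fisher i j p / fisher_det p)"

definition christ1 :: "nat \<Rightarrow> nat \<Rightarrow> nat \<Rightarrow> real \<times> real \<Rightarrow> real" where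
  "christ1 i j k p = (pd i (fisher j k) p + pd j (fisher i k) p - pd k (fisher i j) p) / 2"

definition christ2 :: "nat \<Rightarrow> nat \<Rightarrow> nat \<Rightarrow> real \<times> real \<Rightarrow> real" where
  "christ2 k i j p = (\<Sum>l<2. fisher_inv k l p * christ1 i j l p)"

text \<open>Riemann tensor components R^l_{ijk}, defined by
 R(d_i,d_j) d_k = nabla_i nabla_j d_k - nabla_j nabla_i d_k = sum_l R^l_{ijk} d_l.\<close>
definition riem :: "nat \<Rightarrow> nat \<Rightarrow> nat \<Rightarrow> nat \<Rightarrow> real \<times> real \<Rightarrow> real" where
  "riem l i j k p = pd i (christ2 l j k) p - pd j (christ2 l i k) p
     + (\<Sum>m<2. christ2 l i m p * christ2 m j k p - christ2 l j m p * christ2 m i k p)"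

definition fisher_g :: "real \<times> real \<Rightarrow> real \<times> real \<Rightarrow> real \<times> real \<Rightarrow> real" where
  "fisher_g p u v = (\<Sum>i<2. \<Sum>j<2. comp i u * fisher i j p * comp j v)"

definition riem4 :: "real \<times> real \<Rightarrow> real \<times> real \<Rightarrow> real \<times> real \<Rightarrow> real" where
  "riem4 p u v = (\<Sum>i<2. \<Sum>j<2. \<Sum>k<2. \<Sum>l<2. \<Sum>m<2.
      comp i u * comp j v * comp k v * riem l i j k p * fisher l m p * comp m u)"

definition sectional_curvature :: "real \<times> real \<Rightarrow> real \<times> real \<Rightarrow> real \<times> real \<Rightarrow> real" where
  "sectional_curvature p u v =
     riem4 p u v / (fisher_g p u u * fisher_g p v v - (fisher_g p u v)\<^sup>2)"

end

theory Submission
  imports Defs "HOL-Real_Asymp.Real_Asymp"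
begin

definition S :: "nat \<Rightarrow> real \<Rightarrow> real" where
  "S n t = (\<Sum>k. 1 / (t + real k)^n)"

lemma S_summable: "t > 0 \<Longrightarrow> n \<ge> 2 \<Longrightarrow> summable (\<lambda>k. 1 / (t + real k)^n)"
  using Polygamma_converges'[of t n] by (simp add: inverse_eq_divide)

lemma S_shift:
  assumes "t > 0" "n \<ge> 2" shows "S n t = 1/t^n + S n (t+1)"
proof -
  have "(\<Sum>k. 1/(t + real (Suc k))^n) = S n t - 1/t^n"
    using suminf_split_head[OF S_summable[OF assms]] by (simp add: S_def)
  moreover have "(\<lambda>k. 1/(t + real (Suc k))^n) = (\<lambda>k. 1/((t+1) + real k)^n)"
    by (simp add: algebra_simps)
  ultimately show ?thesis by (simp add: S_def)
qed

lemma S_tail: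
  assumes "t > 0" "n \<ge> 2" shows "(\<lambda>m. S n (t + real m)) \<longlonglongrightarrow> 0"
proof -
  have "(\<lambda>m. \<Sum>k. 1 / (t + real (k + m))^n) \<longlonglongrightarrow> 0"
    using suminf_exist_split2[OF S_summable[OF assms]] by simp
  moreover have "(\<lambda>m. \<Sum>k. 1 / (t + real (k + m))^n) = (\<lambda>m. S n (t + real m))"
    by (simp add: S_def algebra_simps)
  ultimately show ?thesis by simp
qed

lemma S_pos: "t > 0 \<Longrightarrow> n \<ge> 2 \<Longrightarrow> S n t > 0"
  unfolding S_def by (intro suminf_pos S_summable) auto

lemma P1_S: "t > 0 \<Longrightarrow> Polygamma 1 t = S 2 t"
  by (simp add: Polygamma_def S_def inverse_eq_divide power2_eq_square)
lemma P2_S: "t > 0 \<Longrightarrow> Polygamma 2 t = - 2 * S 3 t"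
  by (simp add: Polygamma_def S_def inverse_eq_divide numeral_eq_Suc)
lemma P3_S: "t > 0 \<Longrightarrow> Polygamma 3 t = 6 * S 4 t"
  by (simp add: Polygamma_def S_def inverse_eq_divide numeral_eq_Suc)

lemma inv_pow_lim: assumes "s > 0" "k > 0" shows "(\<lambda>m. 1 / (s + real m)^k) \<longlonglongrightarrow> 0"
  using assms by real_asymp

lemma tele_ge:
  fixes \<Phi> :: "real \<Rightarrow> real"
  assumes "t > 0"
    and lim: "\<And>s. s > 0 \<Longrightarrow> (\<lambda>m. \<Phi> (s + real m)) \<longlonglongrightarrow> 0"
    and d: "\<And>s. s > 0 \<Longrightarrow> \<Phi> (s + 1) \<le> \<Phi> s"
  shows "\<Phi> t \<ge> 0"
proof -
  have "\<Phi> (t + real m) \<le> \<Phi> t" for m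
  proof (induction m)
    case (Suc m)
    have "\<Phi> (t + real (Suc m)) = \<Phi> ((t + real m) + 1)" by (simp add: algebra_simps)
    also have "\<dots> \<le> \<Phi> (t + real m)" using d[of "t + real m"] \<open>t>0\<close> by simp
    finally show ?case using Suc by simp
  qed simp
  then show ?thesis
    using LIMSEQ_le_const2[OF lim[OF \<open>t>0\<close>]] by blast
qed

lemma tele_gt:
  fixes \<Phi> :: "real \<Rightarrow> real"
  assumes "t > 0"
    and lim: "\<And>s. s > 0 \<Longrightarrow> (\<lambda>m. \<Phi> (s + real m)) \<longlonglongrightarrow> 0"
    and d: "\<And>s. s > 0 \<Longrightarrow> \<Phi> (s + 1) < \<Phi> s"
  shows "\<Phi> t > 0"
proof -
  have "\<Phi> (t+1) \<ge> 0" using tele_ge[of "t+1" \<Phi>] lim d \<open>t>0\<close> by (meson less_imp_le add_pos_pos zero_less_one)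
  with d[OF \<open>t>0\<close>] show ?thesis by simp
qed


lemma rat_a2: "s > 0 \<Longrightarrow> 1/(s+1)^2 + 2/(s+1)^3 < 1/(s::real)^2"
proof -
  assume s: "s > 0"
  have "1/s^2 - (1/(s+1)^2 + 2/(s+1)^3) = (3 * s + 1)/(s^2*(s+1)^3)"
    using s by (simp add: field_simps) algebra
  moreover have "(3 * s + 1)/(s^2*(s+1)^3) > 0" using s by simp
  ultimately show ?thesis by linarith
qed

lemma S_tail1: "s > 0 \<Longrightarrow> n \<ge> 2 \<Longrightarrow> (\<lambda>m. S n (s + real m + 1)) \<longlonglongrightarrow> 0"
  using S_tail[of "s+1" n] by (simp add: algebra_simps)

lemma S_lower_gen:
  assumes "t > 0" "n \<ge> 2"
    and lim: "\<And>s. s > 0 \<Longrightarrow> (\<lambda>m. L (s + real m)) \<longlonglongrightarrow> 0"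
    and d: "\<And>s. s > 0 \<Longrightarrow> L s - L (s+1) \<le> 1/s^n"
  shows "L t \<le> S n t"
proof -
  have "(\<lambda>s. S n s - L s) t \<ge> 0"
  proof (rule tele_ge[OF assms(1)])
    fix s :: real assume s: "s > 0"
    show "(\<lambda>m. S n (s + real m) - L (s + real m)) \<longlonglongrightarrow> 0"
      using tendsto_diff[OF S_tail[OF s assms(2)] lim[OF s]] by simp
    show "S n (s + 1) - L (s + 1) \<le> S n s - L s"
      using S_shift[OF s assms(2)] d[OF s] by simp
  qed
  then show ?thesis by simp
qed

lemma S_upper_gen:
  assumes "t > 0" "n \<ge> 2"
    and lim: "\<And>s. s > 0 \<Longrightarrow> (\<lambda>m. U (s + real m)) \<longlonglongrightarrow> 0"
    and d: "\<And>s. s > 0 \<Longrightarrow> U s - U (s+1) \<ge> 1/s^n"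
  shows "S n t \<le> U t"
proof -
  have "(\<lambda>s. U s - S n s) t \<ge> 0"
  proof (rule tele_ge[OF assms(1)])
    fix s :: real assume s: "s > 0"
    show "(\<lambda>m. U (s + real m) - S n (s + real m)) \<longlonglongrightarrow> 0"
      using tendsto_diff[OF lim[OF s] S_tail[OF s assms(2)]] by simp
    show "U (s + 1) - S n (s + 1) \<le> U s - S n s"
      using S_shift[OF s assms(2)] d[OF s] by simp
  qed
  then show ?thesis by simp
qed

lemma S2_lower: assumes "t > 0" shows "1/t + 1/2 * (1/t^2) \<le> S 2 t"
proof (rule S_lower_gen[of t 2 "\<lambda>s. 1/s + 1/2 * (1/s^2)", OF assms])
  fix s :: real assume s: "s > 0"
  show "(\<lambda>m. 1 / (s + real m) + 1/2 * (1 / (s + real m)^2)) \<longlonglongrightarrow> 0"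
    using tendsto_add[OF inv_pow_lim[OF s, of 1, simplified] tendsto_mult[OF tendsto_const[of "1/2"] inv_pow_lim[OF s, of 2, simplified]]] by simp
  define u where "u = s + 1"
  have u: "u > 0" using s by (simp add: u_def)
  have "1/s^2 - (1/s + 1/2 * (1/s^2) - (1/u + 1/2 * (1/u^2))) = 1/(2 * s^2 * u^2)"
    using s u by (simp add: field_simps) (insert u_def, algebra)
  note e = this
  have p: "1/(2 * s^2 * u^2) > 0"
    using s u by (intro divide_pos_pos add_pos_pos mult_pos_pos zero_less_power) auto
  show "1/s + 1/2 * (1/s^2) - (1/(s+1) + 1/2 * (1/(s+1)^2)) \<le> 1/s^2"
    using e[unfolded u_def] p[unfolded u_def] by linarith
qed simp

lemma S4_lower: assumes "t > 0" shows "1/3 * (1/t^3) + 1/2 * (1/t^4) \<le> S 4 t"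
proof (rule S_lower_gen[of t 4 "\<lambda>s. 1/3 * (1/s^3) + 1/2 * (1/s^4)", OF assms])
  fix s :: real assume s: "s > 0"
  show "(\<lambda>m. 1/3 * (1 / (s + real m)^3) + 1/2 * (1 / (s + real m)^4)) \<longlonglongrightarrow> 0"
    using tendsto_add[OF tendsto_mult[OF tendsto_const[of "1/3"] inv_pow_lim[OF s, of 3, simplified]] tendsto_mult[OF tendsto_const[of "1/2"] inv_pow_lim[OF s, of 4, simplified]]] by simp
  define u where "u = s + 1"
  have u: "u > 0" using s by (simp add: u_def)
  have "1/s^4 - (1/3 * (1/s^3) + 1/2 * (1/s^4) - (1/3 * (1/u^3) + 1/2 * (1/u^4)))
     = (3 + 19 * s + 49 * s^2 + 63 * s^3 + 40 * s^4 + 10 * s^5)/(6 * s^4 * u^7)"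
    using s u by (simp add: field_simps) (insert u_def, algebra)
  note e = this
  have p: "(3 + 19 * s + 49 * s^2 + 63 * s^3 + 40 * s^4 + 10 * s^5)/(6 * s^4 * u^7) > 0"
    using s u by (intro divide_pos_pos add_pos_pos mult_pos_pos zero_less_power) auto
  show "1/3 * (1/s^3) + 1/2 * (1/s^4) - (1/3 * (1/(s+1)^3) + 1/2 * (1/(s+1)^4)) \<le> 1/s^4"
    using e[unfolded u_def] p[unfolded u_def] by linarith
qed simp

lemma S2_upper: assumes "t > 0" shows "S 2 t \<le> 1/t + 1/2 * (1/t^2) + 1/6 * (1/t^3)"
proof (rule S_upper_gen[of t 2 "\<lambda>s. 1/s + 1/2 * (1/s^2) + 1/6 * (1/s^3)", OF assms])
  fix s :: real assume s: "s > 0"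
  show "(\<lambda>m. 1 / (s + real m) + 1/2 * (1 / (s + real m)^2) + 1/6 * (1 / (s + real m)^3)) \<longlonglongrightarrow> 0"
    using tendsto_add[OF tendsto_add[OF inv_pow_lim[OF s, of 1, simplified] tendsto_mult[OF tendsto_const[of "1/2"] inv_pow_lim[OF s, of 2, simplified]]]
       tendsto_mult[OF tendsto_const[of "1/6"] inv_pow_lim[OF s, of 3, simplified]]] by simp
  define u where "u = s + 1"
  have u: "u > 0" using s by (simp add: u_def)
  have "(1/s + 1/2 * (1/s^2) + 1/6 * (1/s^3) - (1/u + 1/2 * (1/u^2) + 1/6 * (1/u^3))) - 1/s^2
     = 1/(6 * s^3 * u^3)"
    using s u by (simp add: field_simps) (insert u_def, algebra)
  note e = this
  have p: "1/(6 * s^3 * u^3) > 0"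
    using s u by (intro divide_pos_pos add_pos_pos mult_pos_pos zero_less_power) auto
  show "1/s^2 \<le> 1/s + 1/2 * (1/s^2) + 1/6 * (1/s^3) - (1/(s+1) + 1/2 * (1/(s+1)^2) + 1/6 * (1/(s+1)^3))"
    using e[unfolded u_def] p[unfolded u_def] by linarith
qed simp

lemma S3_upper: assumes "t > 0" shows "S 3 t \<le> 1/2 * (1/t^2) + 1/2 * (1/t^3) + 1/4 * (1/t^4)"
proof (rule S_upper_gen[of t 3 "\<lambda>s. 1/2 * (1/s^2) + 1/2 * (1/s^3) + 1/4 * (1/s^4)", OF assms])
  fix s :: real assume s: "s > 0"
  show "(\<lambda>m. 1/2 * (1 / (s + real m)^2) + 1/2 * (1 / (s + real m)^3) + 1/4 * (1 / (s + real m)^4)) \<longlonglongrightarrow> 0"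
    using tendsto_add[OF tendsto_add[OF tendsto_mult[OF tendsto_const[of "1/2"] inv_pow_lim[OF s, of 2, simplified]] tendsto_mult[OF tendsto_const[of "1/2"] inv_pow_lim[OF s, of 3, simplified]]]
       tendsto_mult[OF tendsto_const[of "1/4"] inv_pow_lim[OF s, of 4, simplified]]] by simp
  define u where "u = s + 1"
  have u: "u > 0" using s by (simp add: u_def)
  have "(1/2 * (1/s^2) + 1/2 * (1/s^3) + 1/4 * (1/s^4) - (1/2 * (1/u^2) + 1/2 * (1/u^3) + 1/4 * (1/u^4))) - 1/s^3
     = (1 + 7 * s + 20 * s^2 + 30 * s^3 + 25 * s^4 + 11 * s^5 + 2 * s^6)/(4 * s^4 * u^9)"
    using s u by (simp add: field_simps) (insert u_def, algebra)
  note e = this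
  have p: "(1 + 7 * s + 20 * s^2 + 30 * s^3 + 25 * s^4 + 11 * s^5 + 2 * s^6)/(4 * s^4 * u^9) > 0"
    using s u by (intro divide_pos_pos add_pos_pos mult_pos_pos zero_less_power) auto
  show "1/s^3 \<le> 1/2 * (1/s^2) + 1/2 * (1/s^3) + 1/4 * (1/s^4) - (1/2 * (1/(s+1)^2) + 1/2 * (1/(s+1)^3) + 1/4 * (1/(s+1)^4))"
    using e[unfolded u_def] p[unfolded u_def] by linarith
qed simp

lemma S3_strict: assumes "t > 0" shows "2 * S 3 (t+1) < 1/t^2"
proof -
  define \<Phi> where "\<Phi> s = 1/s^2 - 2 * S 3 (s+1)" for s
  have "\<Phi> t > 0"
  proof (rule tele_gt[OF assms])
    fix s :: real assume s: "s > 0"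
    show "(\<lambda>m. \<Phi> (s + real m)) \<longlonglongrightarrow> 0"
      using tendsto_diff[OF inv_pow_lim[OF s, of 2] tendsto_mult[OF tendsto_const[of 2] S_tail1[OF s, of 3]]]
      by (simp add: \<Phi>_def)
    have sh: "S 3 (s+1) = 1/(s+1)^3 + S 3 (s+1+1)" using S_shift[of "s+1" 3] s by simp
    have r: "1/(s+1)^2 + 2/(s+1)^3 < 1/s^2" using rat_a2[OF s] .
    show "\<Phi> (s+1) < \<Phi> s" unfolding \<Phi>_def using sh r by simp
  qed
  then show ?thesis by (simp add: \<Phi>_def)
qed

lemma x_mul_id: "(x::real) > 0 \<Longrightarrow> x * (1/2 * (1/x^2) + 1/2 * (1/x^3) + 1/4 * (1/x^4)) = 1/2 * (1/x^1) + 1/2 * (1/x^2) + 1/4 * (1/x^3)"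
  by (simp add: field_simps) algebra

lemma S3_mul_lim: assumes "s > 0" shows "(\<lambda>m. (s + real m) * S 3 (s + real m)) \<longlonglongrightarrow> 0"
proof (rule tendsto_sandwich[of "\<lambda>_. 0" _ _ "\<lambda>m. 1/2 * (1/(s + real m)^1) + 1/2 * (1/(s + real m)^2) + 1/4 * (1/(s + real m)^3)"])
  show "\<forall>\<^sub>F m in sequentially. 0 \<le> (s + real m) * S 3 (s + real m)"
    using assms S_pos[of _ 3] by (intro always_eventually allI) (simp add: less_imp_le)
  show "\<forall>\<^sub>F m in sequentially. (s + real m) * S 3 (s + real m) \<le> 1/2 * (1/(s + real m)^1) + 1/2 * (1/(s + real m)^2) + 1/4 * (1/(s + real m)^3)"
  proof (intro always_eventually allI)
    fix m
    have x: "s + real m > 0" using assms by simp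
    have "(s + real m) * S 3 (s + real m) \<le> (s + real m) * (1/2 * (1/(s + real m)^2) + 1/2 * (1/(s + real m)^3) + 1/4 * (1/(s + real m)^4))"
      using S3_upper[OF x] x by (intro mult_left_mono) auto
    also have "\<dots> = 1/2 * (1/(s + real m)^1) + 1/2 * (1/(s + real m)^2) + 1/4 * (1/(s + real m)^3)"
      using x_mul_id[OF x] .
    finally show "(s + real m) * S 3 (s + real m) \<le> 1/2 * (1/(s + real m)^1) + 1/2 * (1/(s + real m)^2) + 1/4 * (1/(s + real m)^3)" .
  qed
  show "(\<lambda>m. 1/2 * (1/(s + real m)^1) + 1/2 * (1/(s + real m)^2) + 1/4 * (1/(s + real m)^3)) \<longlonglongrightarrow> 0"
    using tendsto_add[OF tendsto_add[OF tendsto_mult[OF tendsto_const[of "1/2"] inv_pow_lim[OF assms, of 1]] tendsto_mult[OF tendsto_const[of "1/2"] inv_pow_lim[OF assms, of 2]]]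
       tendsto_mult[OF tendsto_const[of "1/4"] inv_pow_lim[OF assms, of 3]]] by simp
qed simp

lemma S2_lt: assumes "t > 0" shows "S 2 t < 2 * t * S 3 t"
proof -
  define \<Phi> where "\<Phi> s = 2 * s * S 3 s - S 2 s" for s
  have "\<Phi> t > 0"
  proof (rule tele_gt[OF assms])
    fix s :: real assume s: "s > 0"
    have eq: "(\<lambda>m. \<Phi> (s + real m)) = (\<lambda>m. 2 * ((s + real m) * S 3 (s + real m)) - S 2 (s + real m))"
      by (rule ext) (simp add: \<Phi>_def mult.assoc)
    show "(\<lambda>m. \<Phi> (s + real m)) \<longlonglongrightarrow> 0"
      unfolding eq using tendsto_diff[OF tendsto_mult[OF tendsto_const[of 2] S3_mul_lim[OF s]] S_tail[OF s, of 2]]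
      by simp
    have sh3: "S 3 s = 1/s^3 + S 3 (s+1)" using S_shift[of s 3] s by simp
    have sh2: "S 2 s = 1/s^2 + S 2 (s+1)" using S_shift[of s 2] s by simp
    have "\<Phi> s - \<Phi> (s+1) = 2 * s * (1/s^3) - 1/s^2 - 2 * S 3 (s+1)"
      unfolding \<Phi>_def sh3 sh2 by (simp add: algebra_simps)
    also have "2 * s * (1/s^3) = 2/s^2" using s by (simp add: power_eq_if)
    finally have "\<Phi> s - \<Phi> (s+1) = 1/s^2 - 2 * S 3 (s+1)" by simp
    then show "\<Phi> (s+1) < \<Phi> s" using S3_strict[OF s] by simp
  qed
  then show ?thesis by (simp add: \<Phi>_def)
qed

lemma Phi2_pos: assumes "t > 0"
  shows "3 * t * S 2 t * S 4 t - S 2 t * S 3 t - 2 * t * (S 3 t)^2 > 0"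
proof -
  define u where "u = t + 1"
  have u: "u > 0" using assms by (simp add: u_def)
  define l2 where "l2 = 1/t^2 + (1/u + 1/2 * (1/u^2))"
  define l4 where "l4 = 1/t^4 + (1/3 * (1/u^3) + 1/2 * (1/u^4))"
  define u2 where "u2 = 1/t^2 + (1/u + 1/2 * (1/u^2) + 1/6 * (1/u^3))"
  define u3 where "u3 = 1/t^3 + (1/2 * (1/u^2) + 1/2 * (1/u^3) + 1/4 * (1/u^4))"
  have sh2: "S 2 t = 1/t^2 + S 2 u" using S_shift[of t 2] assms by (simp add: u_def)
  have sh3: "S 3 t = 1/t^3 + S 3 u" using S_shift[of t 3] assms by (simp add: u_def)
  have sh4: "S 4 t = 1/t^4 + S 4 u" using S_shift[of t 4] assms by (simp add: u_def)
  have b1: "l2 \<le> S 2 t" unfolding l2_def sh2 using S2_lower[OF u] by simp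
  have b2: "l4 \<le> S 4 t" unfolding l4_def sh4 using S4_lower[OF u] by simp
  have b3: "S 2 t \<le> u2" unfolding u2_def sh2 using S2_upper[OF u] by simp
  have b4: "S 3 t \<le> u3" unfolding u3_def sh3 using S3_upper[OF u] by simp
  have l2p: "l2 \<ge> 0" and l4p: "l4 \<ge> 0" unfolding l2_def l4_def using assms u by simp_all
  have S2p: "S 2 t \<ge> 0" and S3p: "S 3 t \<ge> 0" using S_pos[OF assms, of 2] S_pos[OF assms, of 3] by simp_all
  have "3 * t * l2 * l4 \<le> 3 * t * S 2 t * S 4 t"
  proof -
    have "l2 * l4 \<le> S 2 t * S 4 t" using b1 b2 l2p l4p by (intro mult_mono) auto
    then show ?thesis using assms by (simp add: mult.assoc)
  qed
  moreover have "S 2 t * S 3 t \<le> u2 * u3"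
    using b3 b4 S2p S3p by (intro mult_mono) auto
  moreover have "2 * t * (S 3 t)^2 \<le> 2 * t * u3^2"
    using b4 S3p assms by (intro mult_left_mono power_mono) auto
  moreover have "3 * t * l2 * l4 - u2 * u3 - 2 * t * u3^2 = (68 + 310 * t + 608 * t^2 + 654 * t^3 + 386 * t^4 + 123 * t^5 + 28 * t^6 + 6 * t^7) / (24 * t^3 * u^8)"
    unfolding l2_def l4_def u2_def u3_def using assms u by (simp add: field_simps) (insert u_def, algebra)
  moreover have "(68 + 310 * t + 608 * t^2 + 654 * t^3 + 386 * t^4 + 123 * t^5 + 28 * t^6 + 6 * t^7) / (24 * t^3 * u^8) > 0"
    using assms u by (intro divide_pos_pos add_pos_pos mult_pos_pos zero_less_power) auto
  ultimately show ?thesis by linarith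
qed

lemma pos_not_nonpos_Int: "(t::real) > 0 \<Longrightarrow> t \<notin> \<int>\<^sub>\<le>\<^sub>0"
  by (auto elim!: nonpos_Ints_cases)

lemma P1_pos: "t > 0 \<Longrightarrow> Polygamma 1 t > (0::real)"
  using P1_S S_pos by simp
lemma P2_neg: "t > 0 \<Longrightarrow> Polygamma 2 t < (0::real)"
  using P2_S S_pos[of t 3] by simp

lemma DERIV_P: "t > 0 \<Longrightarrow> (Polygamma n has_real_derivative Polygamma (Suc n) t) (at t)"
  by (rule has_field_derivative_Polygamma[OF pos_not_nonpos_Int])

lemma DP1: "t > 0 \<Longrightarrow> (Polygamma 1 has_real_derivative Polygamma 2 t) (at t)"
  using DERIV_P[of t 1] by (simp add: numeral_2_eq_2)
lemma DP2: "t > 0 \<Longrightarrow> (Polygamma 2 has_real_derivative Polygamma 3 t) (at t)"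
  using DERIV_P[of t 2] by (simp add: numeral_2_eq_2 numeral_3_eq_3)

lemma tP1_dec: assumes "0 < (x::real)" "x < y" shows "y * Polygamma 1 y < x * Polygamma 1 x"
proof (rule DERIV_neg_imp_decreasing[OF assms(2)])
  fix z assume z: "x \<le> z" "z \<le> y"
  then have zp: "z > 0" using assms by simp
  have "((\<lambda>t. t * Polygamma 1 t) has_real_derivative (z * Polygamma 2 z + 1 * Polygamma 1 z)) (at z)"
    by (rule DERIV_mult'[OF DERIV_ident DP1[OF zp]])
  moreover have "z * Polygamma 2 z + 1 * Polygamma 1 z < 0"
    using S2_lt[OF zp] P1_S[OF zp] P2_S[OF zp] by simp
  ultimately show "\<exists>d. ((\<lambda>t. t * Polygamma 1 t) has_real_derivative d) (at z) \<and> d < 0" by blast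
qed

lemma Q_inc: assumes "0 < (x::real)" "x < y"
  shows "x * Polygamma 2 x / Polygamma 1 x < y * Polygamma 2 y / Polygamma 1 y"
proof (rule DERIV_pos_imp_increasing[OF assms(2)])
  fix z assume z: "x \<le> z" "z \<le> y"
  then have zp: "z > 0" using assms by simp
  have p1: "Polygamma 1 z \<noteq> 0" using P1_pos[OF zp] by simp
  have "((\<lambda>t. t * Polygamma 2 t / Polygamma 1 t) has_real_derivative
      (((z * Polygamma 3 z + 1 * Polygamma 2 z) * Polygamma 1 z - z * Polygamma 2 z * Polygamma 2 z) / (Polygamma 1 z * Polygamma 1 z))) (at z)"
    by (rule DERIV_divide[OF DERIV_mult'[OF DERIV_ident DP2[OF zp]] DP1[OF zp] p1])
  moreover have "((z * Polygamma 3 z + 1 * Polygamma 2 z) * Polygamma 1 z - z * Polygamma 2 z * Polygamma 2 z) / (Polygamma 1 z * Polygamma 1 z) > 0"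
  proof -
    have "(z * Polygamma 3 z + 1 * Polygamma 2 z) * Polygamma 1 z - z * Polygamma 2 z * Polygamma 2 z
        = 2 * (3 * z * S 2 z * S 4 z - S 2 z * S 3 z - 2 * z * (S 3 z)^2)"
      using P1_S[OF zp] P2_S[OF zp] P3_S[OF zp] by (simp add: algebra_simps power2_eq_square)
    then have "(z * Polygamma 3 z + 1 * Polygamma 2 z) * Polygamma 1 z - z * Polygamma 2 z * Polygamma 2 z > 0"
      using Phi2_pos[OF zp] by simp
    then show ?thesis using P1_pos[OF zp] by (intro divide_pos_pos) auto
  qed
  ultimately show "\<exists>d. ((\<lambda>t. t * Polygamma 2 t / Polygamma 1 t) has_real_derivative d) (at z) \<and> d > 0" by blast
qed

lemma I1: assumes "x > 0" "y > 0"
  shows "Polygamma 1 x * Polygamma 1 y - Polygamma 1 (x+y) * (Polygamma 1 x + Polygamma 1 y) > (0::real)"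
proof -
  define s where "s = x + y"
  have sp: "s > 0" using assms by (simp add: s_def)
  define a where "a = Polygamma 1 x"
  define b where "b = Polygamma 1 y"
  define c where "c = Polygamma 1 s"
  have a: "a > 0" and b: "b > 0" and c: "c > 0" using P1_pos assms sp by (simp_all add: a_def b_def c_def)
  have ha: "s * c < x * a" using tP1_dec[of x "x+y"] assms by (simp add: a_def c_def s_def)
  have hb: "s * c < y * b" using tP1_dec[of y "x+y"] assms by (simp add: b_def c_def s_def add.commute)
  have "x / (s * c) - 1/a = (x * a - s * c) / (a * (s * c))"
    using a c sp by (simp add: field_simps)
  moreover have "(x * a - s * c) / (a * (s * c)) > 0" using ha a c sp by (intro divide_pos_pos) auto
  ultimately have fa: "1/a < x / (s * c)" by linarith
  have "y / (s * c) - 1/b = (y * b - s * c) / (b * (s * c))"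
    using b c sp by (simp add: field_simps)
  moreover have "(y * b - s * c) / (b * (s * c)) > 0" using hb b c sp by (intro divide_pos_pos) auto
  ultimately have fb: "1/b < y / (s * c)" by linarith
  from fa fb have "1/a + 1/b < (x + y) / (s * c)" by (simp add: add_divide_distrib)
  also have "\<dots> = 1/c" using sp c by (simp add: s_def)
  finally have "1/a + 1/b < 1/c" .
  then have "(1/a + 1/b) * (a*b*c) < (1/c) * (a*b*c)" using a b c by (intro mult_strict_right_mono) auto
  moreover have "(1/a + 1/b) * (a*b*c) = b*c + a*c" using a b by (simp add: field_simps)
  moreover have "(1/c) * (a*b*c) = a*b" using c by simp
  ultimately have "b*c + a*c < a*b" by linarith
  then show ?thesis by (simp add: a_def b_def c_def s_def algebra_simps)
qed

lemma I2: assumes "x > 0" "y > 0"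
  shows "Polygamma 2 x * Polygamma 2 y * Polygamma 1 (x+y)
     - Polygamma 2 (x+y) * (Polygamma 1 x * Polygamma 2 y + Polygamma 2 x * Polygamma 1 y) > (0::real)"
proof -
  define a where "a = Polygamma 1 x"
  define b where "b = Polygamma 1 y"
  define c where "c = Polygamma 1 (x+y)"
  define a1 where "a1 = Polygamma 2 x"
  define b1 where "b1 = Polygamma 2 y"
  define c1 where "c1 = Polygamma 2 (x+y)"
  have a: "a > 0" and b: "b > 0" and c: "c > 0" using P1_pos assms by (simp_all add: a_def b_def c_def)
  have a1: "a1 < 0" and b1: "b1 < 0" and c1: "c1 < 0" using P2_neg assms by (simp_all add: a1_def b1_def c1_def)
  have ha: "x * a1 / a < (x+y) * c1 / c" using Q_inc[of x "x+y"] assms by (simp add: a_def c_def a1_def c1_def)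
  have hb: "y * b1 / b < (x+y) * c1 / c" using Q_inc[of y "x+y"] assms by (simp add: b_def c_def b1_def c1_def add.commute)
  have qs: "(x+y) * c1 / c < 0" using assms c c1 by (simp add: divide_neg_pos mult_pos_neg)
  have "x * (c / ((x+y) * c1)) < a / a1"
  proof -
    have qx: "x * a1 / a < 0" using ha qs by linarith
    have "1 / ((x+y) * c1 / c) < 1 / (x * a1 / a)"
      by (rule divide_strict_left_mono[OF ha zero_less_one mult_neg_neg[OF qs qx]])
    then have "c / ((x+y) * c1) < a / (x * a1)" by simp
    then have A: "x * (c / ((x+y) * c1)) < x * (a / (x * a1))" using assms by (intro mult_strict_left_mono) auto
    have eq: "x * (a / (x * a1)) = a / a1" using assms by simp
    show ?thesis using A eq by metis
  qed
  moreover have "y * (c / ((x+y) * c1)) < b / b1"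
  proof -
    have qy: "y * b1 / b < 0" using hb qs by linarith
    have "1 / ((x+y) * c1 / c) < 1 / (y * b1 / b)"
      by (rule divide_strict_left_mono[OF hb zero_less_one mult_neg_neg[OF qs qy]])
    then have "c / ((x+y) * c1) < b / (y * b1)" by simp
    then have A: "y * (c / ((x+y) * c1)) < y * (b / (y * b1))" using assms by (intro mult_strict_left_mono) auto
    have eq: "y * (b / (y * b1)) = b / b1" using assms by simp
    show ?thesis using A eq by metis
  qed
  ultimately have "x * (c / ((x+y) * c1)) + y * (c / ((x+y) * c1)) < a / a1 + b / b1" by linarith
  moreover have "x * (c / ((x+y) * c1)) + y * (c / ((x+y) * c1)) = c / c1"
  proof -
    have "x * (c / ((x+y) * c1)) + y * (c / ((x+y) * c1)) = (x + y) * (c / ((x+y) * c1))" by (rule distrib_right[symmetric])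
    also have "\<dots> = c / c1" using assms by simp
    finally show ?thesis .
  qed
  ultimately have "c / c1 < a / a1 + b / b1" by linarith
  then have "(c / c1) * (a1 * b1 * c1) > (a / a1 + b / b1) * (a1 * b1 * c1)"
    using a1 b1 c1 by (intro mult_strict_right_mono_neg) (auto intro: mult_pos_neg simp: mult_neg_neg)
  moreover have "(c / c1) * (a1 * b1 * c1) = c * a1 * b1" using c1 by simp
  moreover have "(a / a1 + b / b1) * (a1 * b1 * c1) = (a * b1 + b * a1) * c1" using a1 b1 by (simp add: field_simps)
  ultimately have "c * a1 * b1 > (a * b1 + b * a1) * c1" by linarith
  then show ?thesis by (simp add: a_def b_def c_def a1_def b1_def c1_def algebra_simps)
qed


definition detg :: "(nat \<Rightarrow> real) \<Rightarrow> real" where "detg g = g 0 * g 2 - g 1 * g 1"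

definition gen_W :: "(nat \<Rightarrow> real) \<Rightarrow> (nat \<Rightarrow> real) \<Rightarrow> nat \<Rightarrow> nat \<Rightarrow> real" where
  "gen_W g h l m = (if l = 0 then g 2 * h m - g 1 * h (m + 1) else g 0 * h (m + 1) - g 1 * h m)"

definition gen_dW :: "(nat \<Rightarrow> real) \<Rightarrow> (nat \<Rightarrow> real) \<Rightarrow> (nat \<Rightarrow> real) \<Rightarrow> (nat \<Rightarrow> real) \<Rightarrow> nat \<Rightarrow> nat \<Rightarrow> real" where
  "gen_dW g g' h h' l m = (if l = 0 then g' 2 * h m + g 2 * h' m - g' 1 * h (m + 1) - g 1 * h' (m + 1)
       else g' 0 * h (m + 1) + g 0 * h' (m + 1) - g' 1 * h m - g 1 * h' m)"

definition gen_dD :: "(nat \<Rightarrow> real) \<Rightarrow> (nat \<Rightarrow> real) \<Rightarrow> real" where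
  "gen_dD g g' = g' 0 * g 2 + g 0 * g' 2 - (g' 1 * g 1 + g 1 * g' 1)"

definition gen_G :: "(nat \<Rightarrow> real) \<Rightarrow> (nat \<Rightarrow> real) \<Rightarrow> nat \<Rightarrow> nat \<Rightarrow> real" where
  "gen_G g h l m = gen_W g h l m / (2 * detg g)"

definition gen_dG :: "(nat \<Rightarrow> real) \<Rightarrow> (nat \<Rightarrow> real) \<Rightarrow> (nat \<Rightarrow> real) \<Rightarrow> (nat \<Rightarrow> real) \<Rightarrow> nat \<Rightarrow> nat \<Rightarrow> real" where
  "gen_dG g g' h h' l m =
    (gen_dW g g' h h' l m * (2 * detg g) - gen_W g h l m * (2 * gen_dD g g')) / ((2 * detg g) * (2 * detg g))"

definition gen_R :: "(nat \<Rightarrow> real) \<Rightarrow> (nat \<Rightarrow> real) \<Rightarrow> (nat \<Rightarrow> real) \<Rightarrow> nat \<Rightarrow> nat \<Rightarrow> real" where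
  "gen_R g h k l kk = gen_dG g (\<lambda>n. h (n + 0)) h (\<lambda>n. k (n + 0)) l (1 + kk)
     - gen_dG g (\<lambda>n. h (n + 1)) h (\<lambda>n. k (n + 1)) l (0 + kk)
     + (\<Sum>m<2. gen_G g h l (0 + m) * gen_G g h m (1 + kk) - gen_G g h l (1 + m) * gen_G g h m (0 + kk))"

definition gen_Rn :: "(nat \<Rightarrow> real) \<Rightarrow> (nat \<Rightarrow> real) \<Rightarrow> (nat \<Rightarrow> real) \<Rightarrow> nat \<Rightarrow> nat \<Rightarrow> real" where
  "gen_Rn g h k l kk =
     (gen_dW g (\<lambda>n. h (n + 0)) h (\<lambda>n. k (n + 0)) l (1 + kk) * (2 * detg g) - gen_W g h l (1 + kk) * (2 * gen_dD g (\<lambda>n. h (n + 0))))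
   - (gen_dW g (\<lambda>n. h (n + 1)) h (\<lambda>n. k (n + 1)) l (0 + kk) * (2 * detg g) - gen_W g h l (0 + kk) * (2 * gen_dD g (\<lambda>n. h (n + 1))))
   + (\<Sum>m<2. gen_W g h l (0 + m) * gen_W g h m (1 + kk) - gen_W g h l (1 + m) * gen_W g h m (0 + kk))"

definition det3 :: "(nat \<Rightarrow> real) \<Rightarrow> (nat \<Rightarrow> real) \<Rightarrow> real" where
  "det3 g h = g 0 * (h 1 * h 3 - h 2 * h 2) - g 1 * (h 0 * h 3 - h 2 * h 1) + g 2 * (h 0 * h 2 - h 1 * h 1)"

lemma numeral_lessThan2: "{..<2::nat} = {0,1}" by auto

lemma R_num:
  assumes D: "detg g \<noteq> 0"
  shows "gen_R g h k l kk = gen_Rn g h k l kk / (4 * (detg g)^2)"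
  using D unfolding gen_R_def gen_Rn_def gen_dG_def gen_G_def numeral_lessThan2
  by (simp add: field_simps power2_eq_square)

lemma sum_R: "detg g \<noteq> 0 \<Longrightarrow> (\<Sum>l<2. gen_R g h k l kk * g (l + m)) = (\<Sum>l<2. gen_Rn g h k l kk * g (l + m)) / (4 * (detg g)^2)"
  by (simp add: R_num sum_divide_distrib)

lemma poly01: "(\<Sum>l<2. gen_Rn g h k l 0 * g (l + 1)) = det3 g h * detg g"
  unfolding gen_Rn_def gen_W_def gen_dW_def gen_dD_def detg_def det3_def numeral_lessThan2
  apply simp
  apply (simp only: One_nat_def[symmetric] Suc_1 Suc_numeral add_num_simps)
  apply algebra
  done

lemma poly00: "(\<Sum>l<2. gen_Rn g h k l 0 * g (l + 0)) = 0"
  unfolding gen_Rn_def gen_W_def gen_dW_def gen_dD_def detg_def det3_def numeral_lessThan2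
  apply simp
  apply (simp only: One_nat_def[symmetric] Suc_1 Suc_numeral add_num_simps)
  apply algebra
  done

lemma poly11: "(\<Sum>l<2. gen_Rn g h k l 1 * g (l + 1)) = 0"
  unfolding gen_Rn_def gen_W_def gen_dW_def gen_dD_def detg_def det3_def numeral_lessThan2
  apply simp
  apply (simp only: One_nat_def[symmetric] Suc_1 Suc_numeral add_num_simps)
  apply algebra
  done

lemma poly10: "(\<Sum>l<2. gen_Rn g h k l 1 * g (l + 0)) = - det3 g h * detg g"
  unfolding gen_Rn_def gen_W_def gen_dW_def gen_dD_def detg_def det3_def numeral_lessThan2
  apply simp
  apply (simp only: One_nat_def[symmetric] Suc_1 Suc_numeral add_num_simps)
  apply algebra
  done

lemma alg:
  assumes D: "detg g \<noteq> 0"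
  shows "(\<Sum>l<2. gen_R g h k l 0 * g (l + 0)) = 0"
    and "(\<Sum>l<2. gen_R g h k l 0 * g (l + 1)) = det3 g h / (4 * detg g)"
    and "(\<Sum>l<2. gen_R g h k l 1 * g (l + 0)) = - det3 g h / (4 * detg g)"
    and "(\<Sum>l<2. gen_R g h k l 1 * g (l + 1)) = 0"
  unfolding sum_R[OF D] poly00 poly01 poly10 poly11 using D by (simp_all add: power2_eq_square)


definition phi :: "nat \<Rightarrow> nat \<Rightarrow> real \<times> real \<Rightarrow> real" where
  "phi n m q = (if m = 0 then Polygamma (n - 1) (fst q) else 0)
     + (if m = n then Polygamma (n - 1) (snd q) else 0) - Polygamma (n - 1) (fst q + snd q)"

lemma DERIV_Pc:
  assumes "(f has_real_derivative f') (at x)" "f x > 0"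
  shows "((\<lambda>t. Polygamma n (f t)) has_real_derivative Polygamma (Suc n) (f x) * f') (at x)"
  using DERIV_chain2[OF DERIV_P[OF assms(2)] assms(1)] .

lemma shift0: "shift 0 t q = (fst q + t, snd q)" by (simp add: shift_def)
lemma shift1: "shift (Suc 0) t q = (fst q, snd q + t)" by (simp add: shift_def)

lemma dphi0:
  assumes q: "fst q > 0" "snd q > 0" and n: "n \<ge> 2" "m \<le> n"
  shows "((\<lambda>t. phi n m (shift 0 t q)) has_real_derivative phi (Suc n) m q) (at 0)"
proof -
  obtain n' where n': "n = Suc n'" using n by (cases n) auto
  have d: "((\<lambda>t. (if m = 0 then Polygamma n' (fst q + t) else 0) + (if m = n then Polygamma n' (snd q) else 0)
           - Polygamma n' (fst q + t + snd q)) has_real_derivative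
        (if m = 0 then Polygamma (Suc n') (fst q + 0) * (0 + 1) else 0) + 0 - Polygamma (Suc n') (fst q + 0 + snd q) * ((0 + 1) + 0)) (at 0)"
    using q
    by (intro DERIV_diff DERIV_add DERIV_Pc DERIV_const) (auto intro!: derivative_eq_intros)
  have ef: "(\<lambda>t. phi n m (shift 0 t q)) = (\<lambda>t. (if m = 0 then Polygamma n' (fst q + t) else 0) + (if m = n then Polygamma n' (snd q) else 0)
           - Polygamma n' (fst q + t + snd q))"
    by (rule ext) (simp add: phi_def shift0 n')
  have ed: "phi (Suc n) m q = (if m = 0 then Polygamma (Suc n') (fst q + 0) * (0 + 1) else 0) + 0 - Polygamma (Suc n') (fst q + 0 + snd q) * ((0 + 1) + 0)"
    using n by (simp add: phi_def n')
  show ?thesis using d unfolding ef ed .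
qed

lemma dphi1:
  assumes q: "fst q > 0" "snd q > 0" and n: "n \<ge> 2" "m \<le> n"
  shows "((\<lambda>t. phi n m (shift (Suc 0) t q)) has_real_derivative phi (Suc n) (Suc m) q) (at 0)"
proof -
  obtain n' where n': "n = Suc n'" using n by (cases n) auto
  have d: "((\<lambda>t. (if m = 0 then Polygamma n' (fst q) else 0) + (if m = n then Polygamma n' (snd q + t) else 0)
           - Polygamma n' (fst q + snd q + t)) has_real_derivative
        0 + (if m = n then Polygamma (Suc n') (snd q + 0) * (0 + 1) else 0) - Polygamma (Suc n') (fst q + snd q + 0) * (0 + 1)) (at 0)"
    using q
    by (intro DERIV_diff DERIV_add DERIV_Pc DERIV_const) (auto intro!: derivative_eq_intros)
  have ef: "(\<lambda>t. phi n m (shift (Suc 0) t q)) = (\<lambda>t. (if m = 0 then Polygamma n' (fst q) else 0) + (if m = n then Polygamma n' (snd q + t) else 0)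
           - Polygamma n' (fst q + snd q + t))"
    by (rule ext) (simp add: phi_def shift1 n' add.assoc)
  have ed: "phi (Suc n) (Suc m) q = 0 + (if m = n then Polygamma (Suc n') (snd q + 0) * (0 + 1) else 0) - Polygamma (Suc n') (fst q + snd q + 0) * (0 + 1)"
    using n by (simp add: phi_def n')
  show ?thesis using d unfolding ef ed .
qed

lemma dphi:
  assumes q: "fst q > 0" "snd q > 0" and n: "n \<ge> 2" "m \<le> n" and i: "i < 2"
  shows "((\<lambda>t. phi n m (shift i t q)) has_real_derivative phi (Suc n) (m + i) q) (at 0)"
proof -
  consider "i = 0" | "i = Suc 0" using i by linarith
  then show ?thesis
  proof cases
    case 1 then show ?thesis using dphi0[OF q n] by simp
  next
    case 2 then show ?thesis using dphi1[OF q n] by simp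
  qed
qed

lemma pd_eq: "((\<lambda>t. f (shift i t q)) has_real_derivative d) (at 0) \<Longrightarrow> pd i f q = d"
  unfolding pd_def by (rule DERIV_imp_deriv)

lemma pd_phi:
  assumes "fst q > 0" "snd q > 0" "n \<ge> 2" "m \<le> n" "i < 2"
  shows "pd i (phi n m) q = phi (Suc n) (m + i) q"
  by (rule pd_eq[OF dphi[OF assms]])

lemma shift_zero: "shift i 0 q = q" by (simp add: shift_def)

lemma pd_cong:
  assumes fg: "\<And>q'. fst q' > 0 \<Longrightarrow> snd q' > 0 \<Longrightarrow> f q' = g q'" and q: "fst q > 0" "snd q > 0"
  shows "pd i f q = pd i g q"
  unfolding pd_def
proof (rule deriv_cong_ev)
  show "\<forall>\<^sub>F t in nhds 0. f (shift i t q) = g (shift i t q)"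
    unfolding eventually_nhds_metric
  proof (intro exI[of _ "min (fst q) (snd q)"] conjI allI impI)
    show "0 < min (fst q) (snd q)" using q by simp
    fix t :: real assume "dist t 0 < min (fst q) (snd q)"
    then have t: "\<bar>t\<bar> < fst q" "\<bar>t\<bar> < snd q" by auto
    have "fst (shift i t q) > 0" "snd (shift i t q) > 0"
      using t q by (auto simp: shift_def)
    then show "f (shift i t q) = g (shift i t q)" by (rule fg)
  qed
qed simp

lemma fisher_phi: "j < 2 \<Longrightarrow> k < 2 \<Longrightarrow> fisher j k = phi 2 (j + k)"
  by (rule ext) (auto simp: fisher_def phi_def Let_def less_2_cases_iff)

lemma christ1_eq:
  assumes q: "fst q > 0" "snd q > 0" and ijk: "i < 2" "j < 2" "k < 2"
  shows "christ1 i j k q = phi 3 (i + j + k) q / 2"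
proof -
  have "pd i (fisher j k) q = phi 3 (i + j + k) q"
    using ijk q by (simp add: fisher_phi pd_phi add_ac)
  moreover have "pd j (fisher i k) q = phi 3 (i + j + k) q"
    using ijk q by (simp add: fisher_phi pd_phi add_ac)
  moreover have "pd k (fisher i j) q = phi 3 (i + j + k) q"
    using ijk q by (simp add: fisher_phi pd_phi add_ac)
  ultimately show ?thesis by (simp add: christ1_def)
qed

lemma detg_pos:
  assumes "fst q > 0" "snd q > 0"
  shows "detg (\<lambda>m. phi 2 m q) > 0"
  using I1[OF assms] by (simp add: detg_def phi_def algebra_simps)

lemma fisher_det_eq: "fisher_det q = detg (\<lambda>m. phi 2 m q)"
  by (simp add: fisher_det_def detg_def fisher_def phi_def Let_def)

lemma christ2_eq:
  assumes q: "fst q > 0" "snd q > 0" and ijk: "l < 2" "j < 2" "k < 2"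
  shows "christ2 l j k q = gen_G (\<lambda>m. phi 2 m q) (\<lambda>m. phi 3 m q) l (j + k)"
proof -
  have D: "detg (\<lambda>m. phi 2 m q) \<noteq> 0" using detg_pos[OF q] by simp
  have c: "christ1 j k n q = phi 3 (j + k + n) q / 2" if "n < 2" for n
    using christ1_eq[OF q ijk(2,3) that] .
  have "christ2 l j k q = fisher_inv l 0 q * christ1 j k 0 q + fisher_inv l 1 q * christ1 j k 1 q"
    by (simp add: christ2_def numeral_lessThan2)
  also have "\<dots> = fisher_inv l 0 q * (phi 3 (j + k) q / 2) + fisher_inv l 1 q * (phi 3 (j + k + 1) q / 2)"
  proof -
    have c0: "christ1 j k 0 q = phi 3 (j + k) q / 2" using c[of 0] by simp
    have c1: "christ1 j k 1 q = phi 3 (j + k + 1) q / 2" using c[of 1] by simp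
    show ?thesis by (simp only: c0 c1)
  qed
  also have "\<dots> = gen_G (\<lambda>m. phi 2 m q) (\<lambda>m. phi 3 m q) l (j + k)"
    using ijk(1) D
    by (auto simp: fisher_inv_def fisher_det_eq gen_G_def gen_W_def fisher_def phi_def Let_def less_2_cases_iff field_simps eval_nat_numeral)
  finally show ?thesis .
qed

lemma DERIV_genG:
  fixes G H :: "nat \<Rightarrow> real \<Rightarrow> real"
  assumes dG: "\<And>m. m \<le> 2 \<Longrightarrow> (G m has_real_derivative G' m) (at 0)"
      and dH: "\<And>m. m \<le> 3 \<Longrightarrow> (H m has_real_derivative H' m) (at 0)"
      and D: "detg (\<lambda>m. G m 0) \<noteq> 0" and l: "l < 2" and mm: "mm \<le> 2"
  shows "((\<lambda>t. gen_G (\<lambda>m. G m t) (\<lambda>m. H m t) l mm) has_real_derivative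
           gen_dG (\<lambda>m. G m 0) G' (\<lambda>m. H m 0) H' l mm) (at 0)"
proof -
  have g0: "(G 0 has_real_derivative G' 0) (at 0)" and g1: "(G 1 has_real_derivative G' 1) (at 0)"
    and g2: "(G 2 has_real_derivative G' 2) (at 0)" using dG by auto
  have h0: "(H mm has_real_derivative H' mm) (at 0)" and h1: "(H (mm + 1) has_real_derivative H' (mm + 1)) (at 0)"
    using dH mm by auto
  have D': "2 * (G 0 0 * G 2 0 - G 1 0 * G 1 0) \<noteq> 0" using D by (simp add: detg_def)
  consider "l = 0" | "l = 1" using l by linarith
  then show ?thesis
  proof cases
    case 1
    have "((\<lambda>t. (G 2 t * H mm t - G 1 t * H (mm + 1) t) / (2 * (G 0 t * G 2 t - G 1 t * G 1 t))) has_real_derivative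
       ((G' 2 * H mm 0 + G 2 0 * H' mm - G' 1 * H (mm + 1) 0 - G 1 0 * H' (mm + 1)) * (2 * (G 0 0 * G 2 0 - G 1 0 * G 1 0))
        - (G 2 0 * H mm 0 - G 1 0 * H (mm + 1) 0) * (2 * (G' 0 * G 2 0 + G 0 0 * G' 2 - (G' 1 * G 1 0 + G 1 0 * G' 1))))
       / ((2 * (G 0 0 * G 2 0 - G 1 0 * G 1 0)) * (2 * (G 0 0 * G 2 0 - G 1 0 * G 1 0)))) (at 0)"
      by (rule derivative_eq_intros g0 g1 g2 h0 h1 refl D' | simp add: algebra_simps)+
    then show ?thesis using 1 by (simp add: gen_G_def gen_W_def gen_dG_def gen_dW_def gen_dD_def detg_def)
  next
    case 2
    have "((\<lambda>t. (G 0 t * H (mm + 1) t - G 1 t * H mm t) / (2 * (G 0 t * G 2 t - G 1 t * G 1 t))) has_real_derivative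
       ((G' 0 * H (mm + 1) 0 + G 0 0 * H' (mm + 1) - G' 1 * H mm 0 - G 1 0 * H' mm) * (2 * (G 0 0 * G 2 0 - G 1 0 * G 1 0))
        - (G 0 0 * H (mm + 1) 0 - G 1 0 * H mm 0) * (2 * (G' 0 * G 2 0 + G 0 0 * G' 2 - (G' 1 * G 1 0 + G 1 0 * G' 1))))
       / ((2 * (G 0 0 * G 2 0 - G 1 0 * G 1 0)) * (2 * (G 0 0 * G 2 0 - G 1 0 * G 1 0)))) (at 0)"
      by (rule derivative_eq_intros g0 g1 g2 h0 h1 refl D' | simp add: algebra_simps)+
    then show ?thesis using 2 by (simp add: gen_G_def gen_W_def gen_dG_def gen_dW_def gen_dD_def detg_def)
  qed
qed

lemma pd_christ2:
  assumes q: "fst q > 0" "snd q > 0" and i: "i < 2" and ljk: "l < 2" "j < 2" "k < 2"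
  shows "pd i (christ2 l j k) q =
    gen_dG (\<lambda>m. phi 2 m q) (\<lambda>m. phi 3 (m + i) q) (\<lambda>m. phi 3 m q) (\<lambda>m. phi 4 (m + i) q) l (j + k)"
proof -
  have "pd i (christ2 l j k) q = pd i (\<lambda>q'. gen_G (\<lambda>m. phi 2 m q') (\<lambda>m. phi 3 m q') l (j + k)) q"
    by (rule pd_cong[OF _ q], rule christ2_eq) (use ljk in auto)
  also have "\<dots> = gen_dG (\<lambda>m. phi 2 m q) (\<lambda>m. phi 3 (m + i) q) (\<lambda>m. phi 3 m q) (\<lambda>m. phi 4 (m + i) q) l (j + k)"
  proof (rule pd_eq)
    have dG: "((\<lambda>t. phi 2 m (shift i t q)) has_real_derivative phi 3 (m + i) q) (at 0)" if "m \<le> 2" for m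
      using dphi[OF q _ that i] by (simp add: numeral_3_eq_3)
    have dH: "((\<lambda>t. phi 3 m (shift i t q)) has_real_derivative phi 4 (m + i) q) (at 0)" if "m \<le> 3" for m
      using dphi[OF q _ that i] by (simp add: numeral_3_eq_3 eval_nat_numeral)
    have D: "detg (\<lambda>m. phi 2 m (shift i 0 q)) \<noteq> 0" using detg_pos[OF q] by (simp add: shift_zero)
    have "((\<lambda>t. gen_G (\<lambda>m. phi 2 m (shift i t q)) (\<lambda>m. phi 3 m (shift i t q)) l (j + k)) has_real_derivative
        gen_dG (\<lambda>m. phi 2 m (shift i 0 q)) (\<lambda>m. phi 3 (m + i) q) (\<lambda>m. phi 3 m (shift i 0 q)) (\<lambda>m. phi 4 (m + i) q) l (j + k)) (at 0)"
      by (rule DERIV_genG[where G = "\<lambda>m t. phi 2 m (shift i t q)" and H = "\<lambda>m t. phi 3 m (shift i t q)", OF dG dH D])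
         (use ljk in auto)
    then show "((\<lambda>t. gen_G (\<lambda>m. phi 2 m (shift i t q)) (\<lambda>m. phi 3 m (shift i t q)) l (j + k)) has_real_derivative
        gen_dG (\<lambda>m. phi 2 m q) (\<lambda>m. phi 3 (m + i) q) (\<lambda>m. phi 3 m q) (\<lambda>m. phi 4 (m + i) q) l (j + k)) (at 0)"
      by (simp add: shift_zero)
  qed
  finally show ?thesis .
qed

lemma riem_eq:
  assumes q: "fst q > 0" "snd q > 0" and lk: "l < 2" "kk < 2"
  shows "riem l 0 1 kk q = gen_R (\<lambda>m. phi 2 m q) (\<lambda>m. phi 3 m q) (\<lambda>m. phi 4 m q) l kk"
proof -
  have a: "pd 0 (christ2 l 1 kk) q = gen_dG (\<lambda>m. phi 2 m q) (\<lambda>n. phi 3 (n + 0) q) (\<lambda>m. phi 3 m q) (\<lambda>n. phi 4 (n + 0) q) l (1 + kk)"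
    using pd_christ2[OF q _ lk(1) _ lk(2), of 0 1] by simp
  have b: "pd 1 (christ2 l 0 kk) q = gen_dG (\<lambda>m. phi 2 m q) (\<lambda>n. phi 3 (n + 1) q) (\<lambda>m. phi 3 m q) (\<lambda>n. phi 4 (n + 1) q) l (0 + kk)"
    using pd_christ2[OF q _ lk(1) _ lk(2), of 1 0] by simp
  have c: "(\<Sum>m<2. christ2 l 0 m q * christ2 m 1 kk q - christ2 l 1 m q * christ2 m 0 kk q)
     = (\<Sum>m<2. gen_G (\<lambda>m. phi 2 m q) (\<lambda>m. phi 3 m q) l (0 + m) * gen_G (\<lambda>m. phi 2 m q) (\<lambda>m. phi 3 m q) m (1 + kk)
        - gen_G (\<lambda>m. phi 2 m q) (\<lambda>m. phi 3 m q) l (1 + m) * gen_G (\<lambda>m. phi 2 m q) (\<lambda>m. phi 3 m q) m (0 + kk))"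
    by (rule sum.cong[OF refl]) (simp add: christ2_eq[OF q] lk)
  show ?thesis unfolding riem_def a b c gen_R_def ..
qed

lemma riem_diag: "riem l i i k p = 0"
  by (simp add: riem_def)

lemma riem_anti: "riem l 1 0 k p = - riem l 0 1 k p"
  by (simp add: riem_def sum_subtractf)

lemma riem_anti': "riem l (Suc 0) 0 k p = - riem l 0 (Suc 0) k p"
  using riem_anti[of l k p] by simp

lemma det3_pos:
  assumes "x > 0" "y > 0"
  shows "det3 (\<lambda>m. phi 2 m (x, y)) (\<lambda>m. phi 3 m (x, y)) > 0"
  using I2[OF assms] by (simp add: det3_def phi_def algebra_simps eval_nat_numeral)

theorem theorem1:
  fixes x y :: real and u v :: "real \<times> real"
  assumes "x > 0" and "y > 0"
    and "fst u * snd v - snd u * fst v \<noteq> 0"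
  shows "sectional_curvature (x, y) u v < 0"
proof -
  define q where "q = (x, y)"
  have q: "fst q > 0" "snd q > 0" using assms by (simp_all add: q_def)
  define g where "g = (\<lambda>m. phi 2 m q)"
  define h where "h = (\<lambda>m. phi 3 m q)"
  define kf where "kf = (\<lambda>m. phi 4 m q)"
  define T where "T = det3 g h / (4 * detg g)"
  define cw where "cw = fst u * snd v - snd u * fst v"
  have Dp: "detg g > 0" using detg_pos[OF q] by (simp add: g_def)
  have d3: "det3 g h > 0" using det3_pos[OF assms(1,2)] by (simp add: g_def h_def q_def)
  have Tp: "T > 0" using Dp d3 by (simp add: T_def)
  have cw: "cw \<noteq> 0" using assms(3) by (simp add: cw_def)
  have Tsum: "(\<Sum>l<2. riem l 0 1 kk q * fisher l m q) = (\<Sum>l<2. gen_R g h kf l kk * g (l + m))"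
    if "kk < 2" "m < 2" for kk m
  proof (rule sum.cong[OF refl])
    fix l assume l: "l \<in> {..<2::nat}"
    have "riem l 0 1 kk q = gen_R g h kf l kk" unfolding g_def h_def kf_def
      by (rule riem_eq[OF q]) (use l that in auto)
    moreover have "fisher l m q = g (l + m)" using l that by (simp add: fisher_phi g_def)
    ultimately show "riem l 0 1 kk q * fisher l m q = gen_R g h kf l kk * g (l + m)" by simp
  qed
  have Dne: "detg g \<noteq> 0" using Dp by simp
  have T00: "(\<Sum>l<2. riem l 0 1 0 q * fisher l 0 q) = 0" using Tsum[of 0 0] alg(1)[OF Dne] by simp
  have T01: "(\<Sum>l<2. riem l 0 1 0 q * fisher l 1 q) = T" using Tsum[of 0 1] alg(2)[OF Dne] by (simp add: T_def)
  have T10: "(\<Sum>l<2. riem l 0 1 1 q * fisher l 0 q) = - T" using Tsum[of 1 0] alg(3)[OF Dne] by (simp add: T_def)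
  have T11: "(\<Sum>l<2. riem l 0 1 1 q * fisher l 1 q) = 0" using Tsum[of 1 1] alg(4)[OF Dne] by simp
  have F: "fisher 1 0 q = fisher 0 1 q" by (simp add: fisher_def)
  have detF: "fisher_det q = detg g" by (simp add: fisher_det_eq g_def)
  have gram: "fisher_g q u u * fisher_g q v v - (fisher_g q u v)^2 = fisher_det q * cw^2"
    unfolding fisher_g_def fisher_det_def cw_def numeral_lessThan2 using F
    by (simp add: comp_def power2_eq_square algebra_simps)
  have R4: "riem4 q u v = - (cw^2 * T)"
    using T00[unfolded numeral_lessThan2] T01[unfolded numeral_lessThan2] T10[unfolded numeral_lessThan2] T11[unfolded numeral_lessThan2] F
    unfolding riem4_def numeral_lessThan2 cw_def
    apply (simp add: riem_diag riem_anti riem_anti' comp_def)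
    apply algebra
    done
  have "sectional_curvature q u v = - T / detg g"
    unfolding sectional_curvature_def R4 gram detF using cw Dne by (simp add: field_simps)
  also have "\<dots> < 0" using Tp Dp by simp
  finally show ?thesis by (simp add: q_def)
qed

end
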